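(* Let $T$ be the regular rooted tree of valence $p\geq 2$ with the embedded wire diffeology $\mathcal{D}_T$, and equip $\operatorname{Aut}T$ with the functional diffeology. Let $P:\mathbb{R}\to\operatorname{Aut}T$ be a plot of this diffeology. Then for all $m,n\in\mathbb{N}$, the automorphisms $P(n)$ and $P(n+1)$ belong to the same coset of $\operatorname{Stab}(n)$, and the automorphisms $P(-m)$ and $P(-m-1)$ belong to the same coset of $\operatorname{Stab}(m)$.
   Context: Fix a finite alphabet $A$ with $|A|=p\geq 2$. The vertices of $T$ are the finite words over $A$ (the root is the empty word); the length $|u|$ of a word is its level; two vertices are joined by an edge iff they have the form $a_1\dots a_n$ and $a_1\dots a_na_{n+1}$. As a topological space, $T$ is the 1-dimensional CW complex obtained by realizing each edge as a copy of $[0,1]$, with its usual topology. $\operatorname{Aut}T$ is the group of bijections of the vertex set fixing the root and preserving adjacency; each is regarded as a homeomorphism of the geometric realization mapping each edge affinely onto its image edge. $\operatorname{Stab}(n)$ is the (normal) subgroup of $\operatorname{Aut}T$ consisting of automorphisms fixing every vertex of level $n$. A diffeology on a set $X$ is a collection of maps $U\to X$ ("plots"), $U$ ranging over open subsets of all $\mathbb{R}^n$, containing all constant maps, closed under precomposition with smooth maps, and satisfying the sheaf condition. The diffeology generated by a set $\mathcal{A}$ of maps is the smallest diffeology containing $\mathcal{A}$. The embedded wire diffeology $\mathcal{D}_T$ is the diffeology on $T$ generated by all maps $\gamma:\mathbb{R}\to T$ that are injective, continuous, and homeomorphisms onto their images. A map between diffeological spaces is smooth if it sends plots to plots. Every element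 of $\operatorname{Aut}T$ is smooth $T\to T$. The product diffeology on $X\times Y$ is the coarsest diffeology making both projections smooth. The functional diffeology on $C^\infty(T,T)$ is the coarsest diffeology such that the evaluation map $C^\infty(T,T)\times T\to T$, $(f,x)\mapsto f(x)$, is smooth; $\operatorname{Aut}T\subseteq C^\infty(T,T)$ carries the induced subset diffeology. Equivalently, $P:U\to\operatorname{Aut}T$ is a plot iff $U\times T\to T$, $(u,x)\mapsto P(u)(x)$, is smooth. *)

theory Defs
  imports "HOL-Analysis.Analysis"
begin

text \<open>Vertices: finite words over the alphabet (the type 'a, with CARD('a) = p).
  The children of u are the words u @ [a].\<close>

definition tree_adj :: "'a list \<Rightarrow> 'a list \<Rightarrow> bool" where
  "tree_adj u v \<longleftrightarrow> (\<exists>a. v = u @ [a]) \<or> (\<exists>a. u = v @ [a])"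

text \<open>Points of the geometric realization: the pair (w, t) with w non-empty and
  0 < t \<le> 1 is the point at parameter t on the edge from butlast w to w (so (w,1) is
  the vertex w); the root is ([], 1).\<close>

definition tree_points :: "('a list \<times> real) set" where
  "tree_points = {(w, t). (w = [] \<and> t = 1) \<or> (w \<noteq> [] \<and> 0 < t \<and> t \<le> 1)}"

definition edge_map :: "'a list \<Rightarrow> real \<Rightarrow> 'a list \<times> real" where
  "edge_map w s = (if s = 0 then (butlast w, 1) else (w, s))"

text \<open>The CW (weak) topology: a set is open iff its preimage under every edge map
  is open in [0,1].\<close>

definition tree_top :: "('a list \<times> real) topology" where
  "tree_top = topology (\<lambda>U. U \<subseteq> tree_points \<and>
     (\<forall>w. w \<noteq> [] \<longrightarrow>
        openin (top_of_set {0..1}) {s \<in> {0..1}. edge_map w s \<in> U}))"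

definition tree_aut :: "('a list \<Rightarrow> 'a list) set" where
  "tree_aut = {\<sigma>. bij \<sigma> \<and> \<sigma> [] = [] \<and>
      (\<forall>u v. tree_adj u v \<longleftrightarrow> tree_adj (\<sigma> u) (\<sigma> v))}"

text \<open>Action on the geometric realization (each edge mapped affinely onto its image).\<close>

definition aut_act :: "('a list \<Rightarrow> 'a list) \<Rightarrow> 'a list \<times> real \<Rightarrow> 'a list \<times> real" where
  "aut_act \<sigma> x = (\<sigma> (fst x), snd x)"

definition Stab :: "nat \<Rightarrow> ('a list \<Rightarrow> 'a list) set" where
  "Stab n = {g \<in> tree_aut. \<forall>w. length w = n \<longrightarrow> g w = w}"

definition same_coset :: "('a list \<Rightarrow> 'a list) set \<Rightarrow> ('a list \<Rightarrow> 'a list)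
     \<Rightarrow> ('a list \<Rightarrow> 'a list) \<Rightarrow> bool" where
  "same_coset H \<sigma> \<tau> \<longleftrightarrow> inv \<sigma> \<circ> \<tau> \<in> H"

text \<open>R^n is realized as the subspace of (nat \<Rightarrow> real) of sequences vanishing from
  index n on; its subspace topology is the usual one.\<close>

definition Rn :: "nat \<Rightarrow> (nat \<Rightarrow> real) set" where
  "Rn n = {x. \<forall>i\<ge>n. x i = 0}"

definition open_dom :: "nat \<Rightarrow> (nat \<Rightarrow> real) set \<Rightarrow> bool" where
  "open_dom n U \<longleftrightarrow> openin (top_of_set (Rn n)) U"

fun ipd :: "nat list \<Rightarrow> ((nat \<Rightarrow> real) \<Rightarrow> real) \<Rightarrow> (nat \<Rightarrow> real) \<Rightarrow> real" where
  "ipd [] f = f"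
| "ipd (i # is) f = (\<lambda>x. deriv (\<lambda>t. ipd is f (x(i := t))) (x i))"

definition smooth_fun :: "nat \<Rightarrow> (nat \<Rightarrow> real) set \<Rightarrow> ((nat \<Rightarrow> real) \<Rightarrow> real) \<Rightarrow> bool" where
  "smooth_fun n U g \<longleftrightarrow>
     (\<forall>is. set is \<subseteq> {..<n} \<longrightarrow>
        continuous_on U (ipd is g) \<and>
        (\<forall>i<n. \<forall>x\<in>U. (\<lambda>t. ipd is g (x(i := t))) differentiable (at (x i))))"

definition smooth_map :: "nat \<Rightarrow> (nat \<Rightarrow> real) set \<Rightarrow> nat
     \<Rightarrow> ((nat \<Rightarrow> real) \<Rightarrow> (nat \<Rightarrow> real)) \<Rightarrow> bool" where
  "smooth_map m V n F \<longleftrightarrow> (\<forall>x\<in>V. F x \<in> Rn n) \<and> (\<forall>j<n. smooth_fun m V (\<lambda>x. F x j))"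

text \<open>A parametrization is a triple (n, U, P) with U an open subset of R^n and
  P : U \<rightarrow> X (values of P outside U are irrelevant).\<close>

type_synonym 'b param = "nat \<times> (nat \<Rightarrow> real) set \<times> ((nat \<Rightarrow> real) \<Rightarrow> 'b)"

definition is_diffeology :: "'b set \<Rightarrow> 'b param set \<Rightarrow> bool" where
  "is_diffeology X D \<longleftrightarrow>
     (\<forall>n U P. (n, U, P) \<in> D \<longrightarrow> open_dom n U \<and> P ` U \<subseteq> X)
   \<and> (\<forall>n U P Q. (n, U, P) \<in> D \<longrightarrow> (\<forall>u\<in>U. P u = Q u) \<longrightarrow> (n, U, Q) \<in> D)
   \<and> (\<forall>n U x. open_dom n U \<longrightarrow> x \<in> X \<longrightarrow> (n, U, \<lambda>_. x) \<in> D)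
   \<and> (\<forall>n U P m V F. (n, U, P) \<in> D \<longrightarrow> open_dom m V \<longrightarrow> smooth_map m V n F
        \<longrightarrow> F ` V \<subseteq> U \<longrightarrow> (m, V, P \<circ> F) \<in> D)
   \<and> (\<forall>n U P. open_dom n U \<longrightarrow> P ` U \<subseteq> X \<longrightarrow>
        (\<forall>u\<in>U. \<exists>V. open_dom n V \<and> u \<in> V \<and> V \<subseteq> U \<and> (n, V, P) \<in> D)
        \<longrightarrow> (n, U, P) \<in> D)"

definition generated_diffeology :: "'b set \<Rightarrow> 'b param set \<Rightarrow> 'b param set" where
  "generated_diffeology X A = \<Inter> {D. is_diffeology X D \<and> A \<subseteq> D}"

text \<open>Generators of the embedded wire diffeology: maps R \<rightarrow> T that are embeddings
  (injective, continuous, homeomorphisms onto their images); R is R^1.\<close>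

definition wire_generators :: "('a list \<times> real) param set" where
  "wire_generators = {(1, Rn 1, \<lambda>x. \<gamma> (x 0)) | \<gamma>. embedding_map euclideanreal tree_top \<gamma>}"

definition wire_diffeology :: "('a list \<times> real) param set" where
  "wire_diffeology = generated_diffeology tree_points wire_generators"

text \<open>Plots R \<rightarrow> Aut T of the functional diffeology: (u, x) \<mapsto> P(u)(x) is smooth
  R \<times> T \<rightarrow> T, where R \<times> T carries the product diffeology, whose plots are the pairs
  (Q1, Q2) with Q1 a smooth map into R and Q2 a plot of T.\<close>

definition functional_plot_R :: "(real \<Rightarrow> ('a list \<Rightarrow> 'a list)) \<Rightarrow> bool" where
  "functional_plot_R P \<longleftrightarrow> (\<forall>u. P u \<in> tree_aut) \<and>
     (\<forall>n V Q1 Q2. open_dom n V \<longrightarrow> smooth_map n V 1 Q1 \<longrightarrow> (n, V, Q2) \<in> wire_diffeology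
        \<longrightarrow> (n, V, \<lambda>v. aut_act (P (Q1 v 0)) (Q2 v)) \<in> wire_diffeology)"

end

theory Submission imports Defs begin

definition TP :: "('a list \<times> real) set \<Rightarrow> bool" where
  "TP U \<longleftrightarrow> U \<subseteq> tree_points \<and>
     (\<forall>w. w \<noteq> [] \<longrightarrow> openin (top_of_set {0..1}) {s \<in> {0..1}. edge_map w s \<in> U})"

lemma istop_TP: "istopology (TP :: ('a list \<times> real) set \<Rightarrow> bool)"
  unfolding istopology_def
proof (intro conjI allI impI)
  fix S T :: "('a list \<times> real) set" assume "TP S" "TP T"
  then show "TP (S \<inter> T)" unfolding TP_def
  proof (intro conjI allI impI)
    fix w :: "'a list" assume w: "w \<noteq> []"
    have "{s \<in> {0..1}. edge_map w s \<in> S \<inter> T} = {s \<in> {0..1}. edge_map w s \<in> S} \<inter> {s \<in> {0..1}. edge_map w s \<in> T}" by auto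
    then show "openin (top_of_set {0..1}) {s \<in> {0..1}. edge_map w s \<in> S \<inter> T}"
      using \<open>TP S\<close> \<open>TP T\<close> w unfolding TP_def by (auto intro: openin_Int)
  qed auto
next
  fix K :: "('a list \<times> real) set set" assume K: "\<forall>k\<in>K. TP k"
  show "TP (\<Union>K)" unfolding TP_def
  proof (intro conjI allI impI)
    show "\<Union>K \<subseteq> tree_points" using K unfolding TP_def by auto
    fix w :: "'a list" assume w: "w \<noteq> []"
    have "{s \<in> {0..1}. edge_map w s \<in> \<Union>K} = \<Union>((\<lambda>k. {s \<in> {0..1}. edge_map w s \<in> k}) ` K)" by auto
    then show "openin (top_of_set {0..1}) {s \<in> {0..1}. edge_map w s \<in> \<Union>K}"
      using K w unfolding TP_def by (auto intro!: openin_Union)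
  qed
qed

lemma tree_top_eq: "tree_top = topology TP"
  by (simp add: tree_top_def TP_def[abs_def])

lemma openin_tree_top: "openin tree_top = TP"
  unfolding tree_top_eq by (rule topology_inverse'[OF istop_TP])

lemma TP_points: "TP tree_points"
  unfolding TP_def
proof (intro conjI allI impI)
  fix w :: "'a list" assume w: "w \<noteq> []"
  have "{s \<in> {0..1}. edge_map w s \<in> tree_points} = {0..1::real}"
    using w by (auto simp: edge_map_def tree_points_def)
  then show "openin (top_of_set {0..1}) {s \<in> {0..1}. edge_map w s \<in> (tree_points::('a list \<times> real) set)}" by simp
qed auto

lemma topspace_tree_top: "topspace tree_top = tree_points"
proof
  show "topspace tree_top \<subseteq> tree_points" unfolding topspace_def openin_tree_top by (auto simp: TP_def)
  show "tree_points \<subseteq> topspace tree_top" unfolding topspace_def openin_tree_top using TP_points by blast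
qed

lemma TP_finite_remove:
  assumes "\<And>w s. w \<noteq> [] \<Longrightarrow> 0 < s \<Longrightarrow> s < 1 \<Longrightarrow> (w, s) \<in> W" and "W \<subseteq> tree_points"
  shows "TP W"
  unfolding TP_def
proof (intro conjI allI impI)
  fix w :: "'a list" assume w: "w \<noteq> []"
  define F where "F = {s \<in> {0,1::real}. edge_map w s \<notin> W}"
  have "finite F" unfolding F_def by auto
  then have "open (- F)" by (simp add: finite_imp_closed open_Compl)
  have "{s \<in> {0..1}. edge_map w s \<in> W} = {0..1} \<inter> (- F)"
    using assms(1)[OF w] unfolding F_def by (auto simp: edge_map_def)
  then show "openin (top_of_set {0..1}) {s \<in> {0..1}. edge_map w s \<in> W}"
    using \<open>open (- F)\<close> by (auto intro: openin_open_Int)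
qed (use assms in auto)

lemma open_vertex_nbhd: "openin tree_top (tree_points - {(w, 1) | w. w \<noteq> v})"
  unfolding openin_tree_top by (rule TP_finite_remove) (auto simp: tree_points_def)

lemma open_vertex_compl: "openin tree_top (tree_points - {(v, 1)})"
  unfolding openin_tree_top by (rule TP_finite_remove) (auto simp: tree_points_def)


definition CP :: "('a list \<times> real) param set" where
  "CP = {(n, U, Q). open_dom n U \<and> Q ` U \<subseteq> tree_points \<and> continuous_map (top_of_set U) tree_top Q}"

lemma smooth_map_cont:
  assumes "smooth_map m V n F"
  shows "continuous_on V F"
proof (rule continuous_on_coordinatewise_then_product)
  fix j
  show "continuous_on V (\<lambda>x. F x j)"
  proof (cases "j < n")
    case True
    then have "smooth_fun m V (\<lambda>x. F x j)" using assms unfolding smooth_map_def by auto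
    then show ?thesis unfolding smooth_fun_def by (metis empty_set empty_subsetI ipd.simps(1))
  next
    case False
    then have "\<forall>x\<in>V. F x j = 0" using assms unfolding smooth_map_def Rn_def by auto
    then show ?thesis using continuous_on_cong[of V V "\<lambda>x. F x j" "\<lambda>_. 0"] by auto
  qed
qed

lemma local_cont:
  assumes "\<And>u. u \<in> U \<Longrightarrow> \<exists>V. openin (top_of_set U) V \<and> u \<in> V \<and> continuous_map (top_of_set V) Y f"
    and "f ` U \<subseteq> topspace Y"
  shows "continuous_map (top_of_set U) Y f"
  unfolding continuous_map_def
proof (intro conjI allI impI)
  show "f \<in> topspace (top_of_set U) \<rightarrow> topspace Y" using assms(2) by auto
  fix W assume W: "openin Y W"
  show "openin (top_of_set U) {x \<in> topspace (top_of_set U). f x \<in> W}"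
  proof (subst openin_subopen, intro ballI)
    fix x assume "x \<in> {x \<in> topspace (top_of_set U). f x \<in> W}"
    then have x: "x \<in> U" "f x \<in> W" by auto
    obtain V where V: "openin (top_of_set U) V" "x \<in> V" "continuous_map (top_of_set V) Y f"
      using assms(1)[OF x(1)] by blast
    have VU: "V \<subseteq> U" using openin_imp_subset[OF V(1)] by simp
    have "openin (top_of_set V) {y \<in> topspace (top_of_set V). f y \<in> W}"
      using V(3) W unfolding continuous_map by blast
    then have "openin (top_of_set U) {y \<in> V. f y \<in> W}"
      using V(1) openin_trans by fastforce
    then show "\<exists>T. openin (top_of_set U) T \<and> x \<in> T \<and> T \<subseteq> {x \<in> topspace (top_of_set U). f x \<in> W}"
      using x V(2) VU by (intro exI[of _ "{y \<in> V. f y \<in> W}"]) auto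
  qed
qed

lemma CP_diffeology: "is_diffeology tree_points CP"
  unfolding is_diffeology_def
proof (intro conjI allI impI)
  fix n U and P :: "(nat \<Rightarrow> real) \<Rightarrow> 'a list \<times> real" assume "(n, U, P) \<in> CP"
  then show "open_dom n U" "P ` U \<subseteq> tree_points" unfolding CP_def by auto
next
  fix n U and P Q :: "(nat \<Rightarrow> real) \<Rightarrow> 'a list \<times> real" assume "(n, U, P) \<in> CP" "\<forall>u\<in>U. P u = Q u"
  then show "(n, U, Q) \<in> CP" unfolding CP_def
    by (auto simp: image_def intro: continuous_map_eq)
next
  fix n U and x :: "'a list \<times> real" assume "open_dom n U" "x \<in> tree_points"
  then show "(n, U, \<lambda>_. x) \<in> CP" unfolding CP_def by (auto simp: topspace_tree_top)
next
  fix n U m V F and P :: "(nat \<Rightarrow> real) \<Rightarrow> 'a list \<times> real" assume a: "(n, U, P) \<in> CP" "open_dom m V" "smooth_map m V n F" "F ` V \<subseteq> U"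
  have "continuous_map (top_of_set V) (top_of_set U) F"
    using smooth_map_cont[OF a(3)] a(4) by auto
  moreover have "continuous_map (top_of_set U) tree_top P"
    using a(1) unfolding CP_def by auto
  ultimately have "continuous_map (top_of_set V) tree_top (P \<circ> F)"
    by (rule continuous_map_compose)
  then show "(m, V, P \<circ> F) \<in> CP" using a unfolding CP_def by auto
next
  fix n U and P :: "(nat \<Rightarrow> real) \<Rightarrow> 'a list \<times> real" assume a: "open_dom n U" "P ` U \<subseteq> tree_points"
    "\<forall>u\<in>U. \<exists>V. open_dom n V \<and> u \<in> V \<and> V \<subseteq> U \<and> (n, V, P) \<in> CP"
  have "continuous_map (top_of_set U) tree_top P"
  proof (rule local_cont)
    fix u assume "u \<in> U"
    then obtain V where V: "open_dom n V" "u \<in> V" "V \<subseteq> U" "(n, V, P) \<in> CP" using a(3) by blast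
    have "openin (top_of_set U) V"
      using V(1,3) a(1) unfolding open_dom_def
      by (meson openin_imp_subset openin_subset_trans)
    then show "\<exists>V. openin (top_of_set U) V \<and> u \<in> V \<and> continuous_map (top_of_set V) tree_top P"
      using V unfolding CP_def by auto
  qed (use a(2) topspace_tree_top in auto)
  then show "(n, U, P) \<in> CP" using a unfolding CP_def by auto
qed

lemma open_dom_Rn: "open_dom n (Rn n)"
  unfolding open_dom_def by simp

lemma gen_CP: "wire_generators \<subseteq> CP"
proof
  fix x :: "('a list \<times> real) param" assume "x \<in> wire_generators"
  then obtain \<gamma> where x: "x = (1, Rn 1, \<lambda>x. \<gamma> (x 0))" and e: "embedding_map euclideanreal tree_top \<gamma>"
    unfolding wire_generators_def by auto
  have c: "continuous_map euclideanreal tree_top \<gamma>"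
    using e unfolding embedding_map_def
    using continuous_map_in_subtopology homeomorphic_imp_continuous_map by blast
  have "continuous_map (top_of_set (Rn 1)) euclideanreal (\<lambda>x::nat\<Rightarrow>real. x 0)"
    by (intro continuous_map_from_subtopology) (simp add: continuous_on_product_then_coordinatewise continuous_on_id)
  then have "continuous_map (top_of_set (Rn 1)) tree_top (\<lambda>x. \<gamma> (x 0))"
    using continuous_map_compose[OF _ c, of "top_of_set (Rn 1)" "\<lambda>x::nat\<Rightarrow>real. x 0"] by (simp add: o_def)
  moreover have "\<gamma> ` UNIV \<subseteq> tree_points" using c topspace_tree_top by (auto simp: continuous_map)
  ultimately show "x \<in> CP" unfolding x CP_def using open_dom_Rn by auto
qed

lemma wire_CP: "wire_diffeology \<subseteq> CP"
  unfolding wire_diffeology_def generated_diffeology_def using CP_diffeology gen_CP by blast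


lemma ipd_coord0:
  "set is \<subseteq> {..<1} \<Longrightarrow> ipd is (\<lambda>x::nat\<Rightarrow>real. x 0) =
     (if is = [] then (\<lambda>x. x 0) else if is = [0] then (\<lambda>_. 1) else (\<lambda>_. 0))"
proof (induction "is")
  case Nil then show ?case by simp
next
  case (Cons i js)
  then have i: "i = 0" and js: "set js \<subseteq> {..<1}" by auto
  show ?case
  proof (cases "js = []")
    case True
    have "deriv (\<lambda>t::real. t) y = 1" for y by (rule DERIV_imp_deriv) (rule DERIV_ident)
    then show ?thesis using True i by (simp add: fun_eq_iff)
  next
    case False
    then obtain c where c: "ipd js (\<lambda>x::nat\<Rightarrow>real. x 0) = (\<lambda>_. c)"
      using Cons.IH[OF js] by (auto split: if_splits)
    have "deriv (\<lambda>t::real. c) y = 0" for y by (rule DERIV_imp_deriv) (rule DERIV_const)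
    then show ?thesis using False i c by (simp add: fun_eq_iff)
  qed
qed

lemma smooth_fun0: "smooth_fun 1 (Rn 1) (\<lambda>x::nat\<Rightarrow>real. x 0)"
  unfolding smooth_fun_def
proof (intro allI impI conjI ballI)
  fix ks :: "nat list" and i x assume ks: "set ks \<subseteq> {..<1}" and "i < (1::nat)" and "x \<in> Rn 1"
  then have i: "i = 0" by simp
  show "(\<lambda>t. ipd ks (\<lambda>x. x 0) (x(i := t))) differentiable (at (x i))"
  proof (cases "ks = []")
    case True
    then have "(\<lambda>t. ipd ks (\<lambda>x::nat\<Rightarrow>real. x 0) (x(i := t))) = (\<lambda>t. t)"
      using i by (simp add: fun_eq_iff)
    then show ?thesis by (simp only: differentiable_ident)
  next
    case False
    then obtain c where "ipd ks (\<lambda>x::nat\<Rightarrow>real. x 0) = (\<lambda>_. c)"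
      using ipd_coord0[OF ks] by (cases "ks = [0]") auto
    then have "(\<lambda>t. ipd ks (\<lambda>x::nat\<Rightarrow>real. x 0) (x(i := t))) = (\<lambda>_. c)"
      by simp
    then show ?thesis by (simp only: differentiable_const)
  qed
next
  fix ks :: "nat list" assume ks: "set ks \<subseteq> {..<1}"
  show "continuous_on (Rn 1) (ipd ks (\<lambda>x::nat\<Rightarrow>real. x 0))"
  proof (cases "ks = []")
    case True
    have "continuous_on (Rn 1) (\<lambda>x::nat\<Rightarrow>real. x 0)"
      by (rule continuous_on_product_then_coordinatewise[OF continuous_on_id])
    then show ?thesis using True by simp
  next
    case False
    then obtain c where "ipd ks (\<lambda>x::nat\<Rightarrow>real. x 0) = (\<lambda>_. c)"
      using ipd_coord0[OF ks] by (cases "ks = [0]") auto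
    then show ?thesis by (simp only: continuous_on_const)
  qed
qed

lemma smooth_id1: "smooth_map 1 (Rn 1) 1 (\<lambda>v. v)"
  unfolding smooth_map_def
proof (intro conjI ballI allI impI)
  fix j :: nat assume "j < 1"
  then have "j = 0" by simp
  then show "smooth_fun 1 (Rn 1) (\<lambda>x. x j)" using smooth_fun0 by simp
qed

lemma const_wire: "(x::'a list \<times> real) \<in> tree_points \<Longrightarrow> (1, Rn 1, \<lambda>_. x) \<in> wire_diffeology"
  unfolding wire_diffeology_def generated_diffeology_def
proof (rule InterI)
  fix D :: "('a list \<times> real) param set" assume x: "x \<in> tree_points" and "D \<in> {D. is_diffeology tree_points D \<and> wire_generators \<subseteq> D}"
  then have "is_diffeology tree_points D" by simp
  then have "\<forall>n U x. open_dom n U \<longrightarrow> x \<in> tree_points \<longrightarrow> (n, U, \<lambda>_. x) \<in> D"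
    unfolding is_diffeology_def by blast
  then show "(1, Rn 1, \<lambda>_. x) \<in> D" using open_dom_Rn[of 1] x by blast
qed

lemma vertex_const:
  fixes P :: "real \<Rightarrow> ('a list \<Rightarrow> 'a list)"
  assumes "functional_plot_R P"
  shows "P r x = P 0 x"
proof -
  have pt: "(x, 1::real) \<in> tree_points" by (simp add: tree_points_def)
  have "(1, Rn 1, \<lambda>v. aut_act (P ((\<lambda>v. v) v 0)) ((\<lambda>_. (x, 1::real)) v)) \<in> wire_diffeology"
    using assms const_wire[OF pt] smooth_id1 open_dom_Rn unfolding functional_plot_R_def by blast
  then have c1: "continuous_map (top_of_set (Rn 1)) tree_top (\<lambda>v::nat\<Rightarrow>real. (P (v 0) x, 1::real))"
    using wire_CP unfolding CP_def by (auto simp: aut_act_def)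
  define e :: "real \<Rightarrow> nat \<Rightarrow> real" where "e = (\<lambda>r i. if i = 0 then r else 0)"
  have "continuous_on UNIV e" unfolding e_def
  proof (intro continuous_on_coordinatewise_then_product)
    fix i :: nat show "continuous_on UNIV (\<lambda>x::real. if i = 0 then x else 0)"
      by (cases "i = 0") (simp_all add: continuous_on_id continuous_on_const)
  qed
  moreover have "e r \<in> Rn 1" for r unfolding e_def Rn_def by auto
  ultimately have "continuous_map euclideanreal (top_of_set (Rn 1)) e"
    by (auto simp: continuous_map_in_subtopology)
  with c1 have c: "continuous_map euclideanreal tree_top (\<lambda>r. (P r x, 1::real))"
    using continuous_map_compose[of euclideanreal "top_of_set (Rn 1)" e tree_top "\<lambda>v::nat\<Rightarrow>real. (P (v 0) x, 1::real)"]
    by (simp add: o_def e_def)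
  define v where "v = P 0 x"
  have oA: "open {r. P r x = v}"
  proof -
    have "openin euclideanreal {r \<in> topspace euclideanreal. (P r x, 1::real) \<in> tree_points - {(w, 1) | w. w \<noteq> v}}"
      using c open_vertex_nbhd unfolding continuous_map_def by blast
    moreover have "{r \<in> topspace euclideanreal. (P r x, 1::real) \<in> tree_points - {(w, 1) | w. w \<noteq> v}} = {r. P r x = v}"
      by (auto simp: tree_points_def)
    ultimately show ?thesis by simp
  qed
  have oB: "open {r. P r x \<noteq> v}"
  proof -
    have "openin euclideanreal {r \<in> topspace euclideanreal. (P r x, 1::real) \<in> tree_points - {(v, 1)}}"
      using c open_vertex_compl unfolding continuous_map_def by blast
    moreover have "{r \<in> topspace euclideanreal. (P r x, 1::real) \<in> tree_points - {(v, 1)}} = {r. P r x \<noteq> v}"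
      by (auto simp: tree_points_def)
    ultimately show ?thesis by simp
  qed
  have "{r. P r x = v} \<inter> UNIV = {} \<or> {r. P r x \<noteq> v} \<inter> UNIV = {}"
    by (rule connectedD[OF connected_UNIV oA oB]) auto
  moreover have "0 \<in> {r. P r x = v}" unfolding v_def by simp
  ultimately show ?thesis unfolding v_def by auto
qed

theorem mainTheorem3:
  fixes P :: "real \<Rightarrow> ('a::finite list \<Rightarrow> 'a list)"
  assumes "CARD('a) \<ge> 2"
    and "functional_plot_R P"
  shows "\<forall>m n :: nat.
           same_coset (Stab n) (P (real n)) (P (real n + 1))
         \<and> same_coset (Stab m) (P (- real m)) (P (- real m - 1))"
proof -
  have eq: "P r = P 0" for r using vertex_const[OF assms(2)] by (simp add: fun_eq_iff)
  have "P 0 \<in> tree_aut" using assms(2) unfolding functional_plot_R_def by blast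
  then have "inv (P 0) \<circ> P 0 = id" unfolding tree_aut_def by (auto simp: bij_is_inj)
  moreover have "id \<in> Stab k" for k unfolding Stab_def tree_aut_def by auto
  ultimately have h: "inv (P a) \<circ> P b \<in> Stab k" for a b k by (simp add: eq[of a] eq[of b])
  show ?thesis unfolding same_coset_def using h by blast
qed

end
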